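(* Let $N\ge1$, let $A\in\{0,1\}^{N\times N}$ be the symmetric adjacency matrix of an undirected graph (top layer) and $L\in\mathbb{R}^{N\times N}$ the symmetric Laplacian matrix of an undirected graph (bottom layer), both on $[N]=\{1,\dots,N\}$, and let $K=\mathrm{diag}(\kappa_1,\dots,\kappa_N)$ with $\kappa_i\in\{0,1\}$. Let $\mathcal{G}_{\mathfrak{T}}$ (resp. $\mathcal{G}_{\mathfrak{B}}$) be the group of $N\times N$ permutation matrices commuting with $A$ (resp. $L$), and let $\mathcal{G}$ be the group of pairs $(P_{\mathfrak{T}},P_{\mathfrak{B}})\in\mathcal{G}_{\mathfrak{T}}\times\mathcal{G}_{\mathfrak{B}}$ with $P_{\mathfrak{B}}K=KP_{\mathfrak{T}}$. The top-layer clusters are the orbits of $[N]$ under the permutations $P_{\mathfrak{T}}$, and the bottom-layer clusters are the orbits of $[N]$ under the permutations $P_{\mathfrak{B}}$, as $(P_{\mathfrak{T}},P_{\mathfrak{B}})$ ranges over $\mathcal{G}$. Let $\mathcal{K}_{\mathfrak{B}}$ be a bottom-layer cluster of size $m$. Then exactly one of the following holds: (i) the cluster receives no inter-layer connections, i.e. $\kappa_i=0$ for all $i\in\mathcal{K}_{\mathfrak{B}}$; (ii) the cluster receives one-to-one inter-layer connections from a top-layer cluster of size at least $m$, i.e. $\kappa_i=1$ for all $i\in\mathcal{K}_{\mathfrak{B}}$ and the top-layer nodes $i\in\mathcal{K}_{\mathfrak{B}}$ all belong to a single top-layer cluster $\mathcal{K}_{\mathfrak{T}}$ with $|\mathcal{K}_{\mathfrak{T}}|\ge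 m$.
   Context: The setting is a duplex network: top-layer node $i$ is connected by a directed inter-layer link to bottom-layer node $i$ exactly when $\kappa_i=1$, and there are no other inter-layer links. The dynamics is $\dot x_i=\mathfrak{t}(x_i)+\alpha\sum_j A_{ij}\mathfrak{u}(x_j)$, $\dot y_i=\mathfrak{b}(y_i)-\beta\sum_j L_{ij}\mathfrak{c}(y_j)+\sigma\kappa_i D(x_i-y_i)$, and $\mathcal{G}$ is the group of symmetries (layer-preserving node permutations) under which this system is invariant. *)

theory Defs
  imports "HOL-Analysis.Analysis" "HOL-Combinatorics.Permutations"
begin

text \<open>Nodes [N] are the elements of a finite (nonempty) type 'n, so N = CARD('n) \<ge> 1.\<close>

definition perm_mat :: "('n::finite \<Rightarrow> 'n) \<Rightarrow> real^'n^'n" where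
  "perm_mat p = (\<chi> i j. if i = p j then 1 else 0)"

definition is_adjacency :: "real^'n^'n \<Rightarrow> bool" where
  "is_adjacency A \<longleftrightarrow> (\<forall>i j. A$i$j = A$j$i) \<and> (\<forall>i j. A$i$j = 0 \<or> A$i$j = 1)"

definition is_laplacian :: "real^'n::finite^'n \<Rightarrow> bool" where
  "is_laplacian L \<longleftrightarrow> (\<exists>W. is_adjacency W \<and> (\<forall>i. W$i$i = 0) \<and>
      (\<forall>i j. L$i$j = (if i = j then (\<Sum>k\<in>UNIV. W$i$k) else 0) - W$i$j))"

definition diag_mat :: "('n::finite \<Rightarrow> real) \<Rightarrow> real^'n^'n" where
  "diag_mat \<kappa> = (\<chi> i j. if i = j then \<kappa> i else 0)"

definition sym_group :: "real^'n::finite^'n \<Rightarrow> real^'n^'n \<Rightarrow> ('n \<Rightarrow> real)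
    \<Rightarrow> (('n \<Rightarrow> 'n) \<times> ('n \<Rightarrow> 'n)) set" where
  "sym_group A L \<kappa> = {(pT, pB). pT permutes UNIV \<and> pB permutes UNIV \<and>
      perm_mat pT ** A = A ** perm_mat pT \<and>
      perm_mat pB ** L = L ** perm_mat pB \<and>
      perm_mat pB ** diag_mat \<kappa> = diag_mat \<kappa> ** perm_mat pT}"

definition top_cluster :: "real^'n::finite^'n \<Rightarrow> real^'n^'n \<Rightarrow> ('n \<Rightarrow> real) \<Rightarrow> 'n \<Rightarrow> 'n set" where
  "top_cluster A L \<kappa> i = {fst g i | g. g \<in> sym_group A L \<kappa>}"

definition bottom_cluster :: "real^'n::finite^'n \<Rightarrow> real^'n^'n \<Rightarrow> ('n \<Rightarrow> real) \<Rightarrow> 'n \<Rightarrow> 'n set" where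
  "bottom_cluster A L \<kappa> i = {snd g i | g. g \<in> sym_group A L \<kappa>}"

end

theory Submission
  imports Defs
begin

lemma PK_entry: "(perm_mat p ** diag_mat \<kappa>)$i$j = (if i = p j then \<kappa> j else 0)"
proof -
  have "(perm_mat p ** diag_mat \<kappa>)$i$j = (\<Sum>k\<in>UNIV. (if i = p k then 1 else 0) * (if k = j then \<kappa> k else 0))"
    by (simp add: matrix_matrix_mult_def perm_mat_def diag_mat_def)
  also have "\<dots> = (\<Sum>k\<in>UNIV. if k = j then (if i = p j then \<kappa> j else 0) else 0)"
    by (rule sum.cong) auto
  finally show ?thesis by simp
qed

lemma KP_entry: "(diag_mat \<kappa> ** perm_mat p)$i$j = (if i = p j then \<kappa> i else 0)"
proof -
  have "(diag_mat \<kappa> ** perm_mat p)$i$j = (\<Sum>k\<in>UNIV. (if i = k then \<kappa> i else 0) * (if k = p j then 1 else 0))"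
    by (simp add: matrix_matrix_mult_def perm_mat_def diag_mat_def)
  also have "\<dots> = (\<Sum>k\<in>UNIV. if k = i then (if i = p j then \<kappa> i else 0) else 0)"
    by (rule sum.cong) auto
  finally show ?thesis by simp
qed

lemma key:
  assumes "(pT, pB) \<in> sym_group A L \<kappa>"
  shows "\<kappa> j = (if pB j = pT j then \<kappa> (pB j) else 0)" "pB permutes UNIV"
proof -
  have "perm_mat pB ** diag_mat \<kappa> = diag_mat \<kappa> ** perm_mat pT" "pB permutes UNIV"
    using assms by (auto simp: sym_group_def)
  then have "(perm_mat pB ** diag_mat \<kappa>)$(pB j)$j = (diag_mat \<kappa> ** perm_mat pT)$(pB j)$j"
    by simp
  then show "\<kappa> j = (if pB j = pT j then \<kappa> (pB j) else 0)"
    by (simp add: PK_entry KP_entry)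
  show "pB permutes UNIV" by fact
qed

lemma kappa_pres:
  assumes g: "(pT, pB) \<in> sym_group A L \<kappa>" and k01: "\<forall>i. \<kappa> i = 0 \<or> \<kappa> i = 1"
  shows "\<kappa> (pB j) = \<kappa> j"
proof -
  let ?S = "{i. \<kappa> i = 1}"
  have one: "\<kappa> (pB i) = 1 \<and> pB i = pT i" if "\<kappa> i = 1" for i
    using key(1)[OF g, of i] that by (auto split: if_splits)
  have perm: "pB permutes UNIV" using key(2)[OF g] .
  have inj: "inj pB" using perm permutes_inj by blast
  have sub: "pB ` ?S \<subseteq> ?S" using one by force
  have "card (pB ` ?S) = card ?S" using inj by (simp add: card_image inj_on_def inj_def)
  then have eq: "pB ` ?S = ?S" using sub by (simp add: card_subset_eq)
  show ?thesis
  proof (cases "\<kappa> j = 1")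
    case True then show ?thesis using one by metis
  next
    case False
    then have "\<kappa> j = 0" using k01 by blast
    moreover have "\<kappa> (pB j) \<noteq> 1"
    proof
      assume "\<kappa> (pB j) = 1"
      then have "pB j \<in> pB ` ?S" using eq by auto
      then have "j \<in> ?S" using inj by (auto simp: inj_def)
      with False show False by simp
    qed
    ultimately show ?thesis using k01 by metis
  qed
qed

lemma pid: "perm_mat id = mat 1" by (simp add: perm_mat_def mat_def vec_eq_iff)

lemma id_in: "(id, id) \<in> sym_group A L \<kappa>"
proof -
  have "perm_mat id ** A = A ** perm_mat id" "perm_mat id ** L = L ** perm_mat id"
    "perm_mat id ** diag_mat \<kappa> = diag_mat \<kappa> ** perm_mat id"
    by (simp_all only: pid matrix_mul_lid matrix_mul_rid)
  then show ?thesis unfolding sym_group_def by (simp add: permutes_id)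
qed

theorem corollary1:
  fixes A L :: "real^'n::finite^'n" and \<kappa> :: "'n \<Rightarrow> real" and i0 :: 'n
  assumes "is_adjacency A"
    and "is_laplacian L"
    and "\<forall>i. \<kappa> i = 0 \<or> \<kappa> i = 1"
  defines "C \<equiv> bottom_cluster A L \<kappa> i0"
  defines "m \<equiv> card C"
  shows "((\<forall>i\<in>C. \<kappa> i = 0) \<or>
          ((\<forall>i\<in>C. \<kappa> i = 1) \<and>
           (\<exists>j. C \<subseteq> top_cluster A L \<kappa> j \<and> card (top_cluster A L \<kappa> j) \<ge> m)))
      \<and> \<not> ((\<forall>i\<in>C. \<kappa> i = 0) \<and>
          ((\<forall>i\<in>C. \<kappa> i = 1) \<and>
           (\<exists>j. C \<subseteq> top_cluster A L \<kappa> j \<and> card (top_cluster A L \<kappa> j) \<ge> m)))"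
proof -
  have i0C: "i0 \<in> C" unfolding C_def bottom_cluster_def using id_in
    by (metis (mono_tags, lifting) id_apply mem_Collect_eq snd_conv)
  have allk: "\<forall>i\<in>C. \<kappa> i = \<kappa> i0"
    using kappa_pres[OF _ assms(3)] unfolding C_def bottom_cluster_def by force
  have part1: "(\<forall>i\<in>C. \<kappa> i = 0) \<or>
          ((\<forall>i\<in>C. \<kappa> i = 1) \<and>
           (\<exists>j. C \<subseteq> top_cluster A L \<kappa> j \<and> card (top_cluster A L \<kappa> j) \<ge> m))"
  proof (cases "\<kappa> i0 = 0")
    case True then show ?thesis using allk by simp
  next
    case False
    then have k1: "\<kappa> i0 = 1" using assms(3) by blast
    have sub: "C \<subseteq> top_cluster A L \<kappa> i0"
    proof
      fix x assume "x \<in> C"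
      then obtain pT pB where g: "(pT, pB) \<in> sym_group A L \<kappa>" and x: "x = pB i0"
        unfolding C_def bottom_cluster_def by auto
      have "pB i0 = pT i0" using key(1)[OF g, of i0] k1 by (auto split: if_splits)
      then show "x \<in> top_cluster A L \<kappa> i0" using g x unfolding top_cluster_def by force
    qed
    have "card C \<le> card (top_cluster A L \<kappa> i0)" using sub by (simp add: card_mono)
    then show ?thesis using sub allk k1 m_def by auto
  qed
  show ?thesis using part1 i0C by force
qed

end
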